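(* Fix a scenario $v$. Conditioned on $v$, on the taken box $i^*$, and on the stopping time $\tau^*$, the expected objective of Balanced Stopping with Poisson Rounding is at most $\tau^*+c_{i^*}+v_{i^*}=\tau^*+\beta_{i^*}$.
   Context: Correlated Pandora's Problem: boxes $[n]$, box $i$ has opening cost $c_i>0$ and volume $v_i\ge 0$; scenario $v=(v_1,\dots,v_n)$. Write $x_+=\max\{x,0\}$. Let $X_i:[0,\infty)\to[0,1]$, $i\in[n]$, be non-decreasing with $\sum_{i}\big(X_i(t)-X_i((t-c_i)_+)\big)\le 1$ for all $t\ge 0$ (a feasible solution of the General-Cost Convex Program). Poisson Rounding: $\bar x_i(t)=\frac1t\int_0^t\big(X_i(t')-X_i((t'-c_i)_+)\big)\,dt'$; independently for each box $i$, arrivals form a non-homogeneous Poisson process in Poisson time $\tau\ge 0$ with rate $\frac1{c_i}\bar x_i(\tau/2)$; $\alpha_i$ is the first arrival time of box $i$. Balanced Stopping: $\beta_i=c_i+v_i$, $\tau_i=\max\{\alpha_i,\beta_i\}$, $\tau^*=\min_i\tau_i$ (the stopping time), $i^*=\arg\min_i\tau_i$ (the taken box). The algorithm opens in real time, in ascending order of $\alpha_j$, exactly the boxes with $\alpha_j\le\tau^*$ (each costing $c_j$), then stops and takes box $i^*$ (or an opened box of no larger volume); its objective is $\sum_{j:\alpha_j\le\tau^*}c_j$ plus the taken volume. *)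

theory Defs
  imports "HOL-Probability.Probability"
begin

definition pos_part :: "real \<Rightarrow> real" where
  "pos_part x = max x 0"

definition gccp_feasible :: "nat \<Rightarrow> (nat \<Rightarrow> real) \<Rightarrow> (nat \<Rightarrow> real \<Rightarrow> real) \<Rightarrow> bool" where
  "gccp_feasible n c X \<longleftrightarrow>
     (\<forall>i<n. mono_on {0..} (X i) \<and> (\<forall>t\<ge>0. 0 \<le> X i t \<and> X i t \<le> 1)) \<and>
     (\<forall>t\<ge>0. (\<Sum>i<n. X i t - X i (pos_part (t - c i))) \<le> 1)"

definition xbar :: "(nat \<Rightarrow> real) \<Rightarrow> (nat \<Rightarrow> real \<Rightarrow> real) \<Rightarrow> nat \<Rightarrow> real \<Rightarrow> real" where
  "xbar c X i t = (1 / t) * integral {0..t} (\<lambda>t'. X i t' - X i (pos_part (t' - c i)))"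

definition prate :: "(nat \<Rightarrow> real) \<Rightarrow> (nat \<Rightarrow> real \<Rightarrow> real) \<Rightarrow> nat \<Rightarrow> real \<Rightarrow> real" where
  "prate c X i \<tau> = (1 / c i) * xbar c X i (\<tau> / 2)"

definition cum_rate :: "(nat \<Rightarrow> real) \<Rightarrow> (nat \<Rightarrow> real \<Rightarrow> real) \<Rightarrow> nat \<Rightarrow> real \<Rightarrow> real" where
  "cum_rate c X i \<tau> = integral {0..\<tau>} (prate c X i)"

text \<open>Balanced Stopping. First arrival times take values in [0,\<infinity>] (\<infinity> = no arrival).\<close>
definition beta :: "(nat \<Rightarrow> real) \<Rightarrow> (nat \<Rightarrow> real) \<Rightarrow> nat \<Rightarrow> real" where
  "beta c v i = c i + v i"

definition tau_box :: "(nat \<Rightarrow> real) \<Rightarrow> (nat \<Rightarrow> real) \<Rightarrow> (nat \<Rightarrow> 'a \<Rightarrow> ennreal) \<Rightarrow> nat \<Rightarrow> 'a \<Rightarrow> ennreal" where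
  "tau_box c v \<alpha> i \<omega> = max (\<alpha> i \<omega>) (ennreal (beta c v i))"

definition tau_star :: "nat \<Rightarrow> (nat \<Rightarrow> real) \<Rightarrow> (nat \<Rightarrow> real) \<Rightarrow> (nat \<Rightarrow> 'a \<Rightarrow> ennreal) \<Rightarrow> 'a \<Rightarrow> ennreal" where
  "tau_star n c v \<alpha> \<omega> = Min ((\<lambda>i. tau_box c v \<alpha> i \<omega>) ` {..<n})"

definition i_star :: "nat \<Rightarrow> (nat \<Rightarrow> real) \<Rightarrow> (nat \<Rightarrow> real) \<Rightarrow> (nat \<Rightarrow> 'a \<Rightarrow> ennreal) \<Rightarrow> 'a \<Rightarrow> nat" where
  "i_star n c v \<alpha> \<omega> = (LEAST i. i < n \<and> tau_box c v \<alpha> i \<omega> = tau_star n c v \<alpha> \<omega>)"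

definition objective :: "nat \<Rightarrow> (nat \<Rightarrow> real) \<Rightarrow> (nat \<Rightarrow> real) \<Rightarrow> (nat \<Rightarrow> 'a \<Rightarrow> ennreal) \<Rightarrow> 'a \<Rightarrow> ennreal" where
  "objective n c v \<alpha> \<omega> =
     ennreal (\<Sum>j\<in>{j. j < n \<and> \<alpha> j \<omega> \<le> tau_star n c v \<alpha> \<omega>}. c j) + ennreal (v (i_star n c v \<alpha> \<omega>))"

end

theory Submission
  imports Defs
begin

definition gf :: "(nat \<Rightarrow> real) \<Rightarrow> (nat \<Rightarrow> real \<Rightarrow> real) \<Rightarrow> nat \<Rightarrow> real \<Rightarrow> real" where
  "gf c X i t = X i t - X i (pos_part (t - c i))"

lemma pos_part_props: "c > 0 \<Longrightarrow> t \<ge> 0 \<Longrightarrow> 0 \<le> pos_part (t - c) \<and> pos_part (t - c) \<le> t"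
  by (auto simp: pos_part_def)

lemma gf_bounds:
  assumes "gccp_feasible n c X" "i < n" "c i > 0" "t \<ge> 0"
  shows "0 \<le> gf c X i t \<and> gf c X i t \<le> 1"
proof -
  have m: "mono_on {0..} (X i)" and b: "\<And>t. t \<ge> 0 \<Longrightarrow> 0 \<le> X i t \<and> X i t \<le> 1"
    using assms(1,2) unfolding gccp_feasible_def by auto
  have p: "0 \<le> pos_part (t - c i)" "pos_part (t - c i) \<le> t" using pos_part_props[OF assms(3,4)] by auto
  have "X i (pos_part (t - c i)) \<le> X i t" using mono_onD[OF m _ _ p(2)] p assms(4) by auto
  then show ?thesis using b[OF assms(4)] b[OF p(1)] unfolding gf_def by auto
qed

lemma gf_integrable:
  assumes "gccp_feasible n c X" "i < n"
  shows "gf c X i integrable_on {0..s}"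
proof -
  have m: "mono_on {0..} (X i)"
    using assms(1,2) unfolding gccp_feasible_def by auto
  have "mono_on {0..s} (X i)" by (rule mono_on_subset[OF m]) auto
  then have 1: "X i integrable_on {0..s}" by (rule integrable_on_mono_on)
  have "mono_on {0..s} (\<lambda>t. X i (pos_part (t - c i)))"
  proof (rule mono_onI)
    fix r t assume "r \<in> {0..s}" "t \<in> {0..s}" "r \<le> t"
    then show "X i (pos_part (r - c i)) \<le> X i (pos_part (t - c i))"
      by (intro mono_onD[OF m]) (auto simp: pos_part_def)
  qed
  then have 2: "(\<lambda>t. X i (pos_part (t - c i))) integrable_on {0..s}" by (rule integrable_on_mono_on)
  show ?thesis unfolding gf_def[abs_def] using integrable_diff[OF 1 2] by simp
qed

lemma gf_eta: "(\<lambda>t'. X i t' - X i (pos_part (t' - c i))) = gf c X i"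
  by (auto simp: gf_def)

lemma xbar_gf: "xbar c X i t = (1 / t) * integral {0..t} (gf c X i)"
  unfolding xbar_def gf_eta ..

lemma F_isCont:
  assumes "gccp_feasible n c X" "i < n" "u > 0"
  shows "isCont (\<lambda>u. integral {0..u} (gf c X i)) u"
proof -
  have "continuous_on {0..u+1} (\<lambda>u. integral {0..u} (gf c X i))"
    by (rule indefinite_integral_continuous_1[OF gf_integrable[OF assms(1,2)]])
  then show ?thesis
    by (rule continuous_on_interior) (use assms in auto)
qed

lemma xbar_bounds:
  assumes "gccp_feasible n c X" "i < n" "c i > 0" "t \<ge> 0"
  shows "0 \<le> xbar c X i t \<and> xbar c X i t \<le> 1"
proof (cases "t = 0")
  case True then show ?thesis by (simp add: xbar_def)
next
  case False
  then have tp: "t > 0" using assms by auto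
  have i0: "0 \<le> integral {0..t} (gf c X i)"
    by (rule integral_nonneg[OF gf_integrable[OF assms(1,2)]]) (use gf_bounds[OF assms(1-3)] in auto)
  have "integral {0..t} (gf c X i) \<le> integral {0..t} (\<lambda>_. 1::real)"
    by (rule integral_le[OF gf_integrable[OF assms(1,2)]]) (use gf_bounds[OF assms(1-3)] in auto)
  also have "\<dots> = t" using tp by simp
  finally show ?thesis using i0 tp unfolding xbar_gf by (auto simp: field_simps)
qed

lemma xbar_sum:
  assumes "gccp_feasible n c X" "\<And>i. i < n \<Longrightarrow> c i > 0" "t \<ge> 0"
  shows "(\<Sum>i<n. xbar c X i t) \<le> 1"
proof (cases "t = 0")
  case True then show ?thesis by (simp add: xbar_def)
next
  case False
  then have tp: "t > 0" using assms by auto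
  have int: "\<And>i. i \<in> {..<n} \<Longrightarrow> gf c X i integrable_on {0..t}" using gf_integrable[OF assms(1)] by auto
  have isum: "integral {0..t} (\<lambda>x. \<Sum>i<n. gf c X i x) = (\<Sum>i<n. integral {0..t} (gf c X i))"
    by (rule integral_sum[OF finite_lessThan int])
  have "(\<Sum>i<n. xbar c X i t) = (1/t) * integral {0..t} (\<lambda>x. \<Sum>i<n. gf c X i x)"
    unfolding xbar_gf isum by (simp add: sum_divide_distrib)
  also have "integral {0..t} (\<lambda>x. \<Sum>i<n. gf c X i x) \<le> integral {0..t} (\<lambda>_. 1::real)"
  proof (rule integral_le)
    show "(\<lambda>x. \<Sum>i<n. gf c X i x) integrable_on {0..t}" by (rule integrable_sum[OF _ int]) auto
    fix x assume "x \<in> {0..t}"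
    then show "(\<Sum>i<n. gf c X i x) \<le> 1" using assms(1) unfolding gccp_feasible_def gf_def by auto
  qed auto
  then have "(1/t) * integral {0..t} (\<lambda>x. \<Sum>i<n. gf c X i x) \<le> (1/t) * t"
    using tp by (intro mult_left_mono) auto
  finally show ?thesis using tp by simp
qed

lemma prate_eq: "prate c X i \<tau> = (1 / c i) * ((1 / (\<tau>/2)) * integral {0..\<tau>/2} (gf c X i))"
  unfolding prate_def xbar_gf ..

lemma prate_isCont:
  assumes "gccp_feasible n c X" "i < n" "\<tau> > 0"
  shows "isCont (prate c X i) \<tau>"
proof -
  have h: "isCont (\<lambda>u. integral {0..u} (gf c X i)) (\<tau>/2)"
    by (rule F_isCont[OF assms(1,2)]) (use assms in auto)
  have h2: "isCont (\<lambda>\<tau>. integral {0..\<tau>/2} (gf c X i)) \<tau>"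
    using isCont_o2[where f="\<lambda>\<tau>. \<tau>/2" and a=\<tau> and g="\<lambda>u. integral {0..u} (gf c X i)"] h by (auto intro: continuous_intros)
  have "isCont (\<lambda>\<tau>. (1 / c i) * ((1 / (\<tau>/2)) * integral {0..\<tau>/2} (gf c X i))) \<tau>"
    using assms(3) by (intro continuous_intros h2) auto
  then show ?thesis unfolding prate_eq[abs_def] .
qed

lemma prate_bounds:
  assumes "gccp_feasible n c X" "i < n" "c i > 0" "\<tau> \<ge> 0"
  shows "0 \<le> prate c X i \<tau> \<and> prate c X i \<tau> \<le> 1 / c i"
  using xbar_bounds[OF assms(1-3), of "\<tau>/2"] assms(3,4) unfolding prate_def
  by (auto simp: field_simps)

lemma prate_integrable:
  assumes "gccp_feasible n c X" "i < n" "c i > 0"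
  shows "prate c X i integrable_on {0..s}"
proof -
  have co: "continuous_on {0<..s} (prate c X i)"
    by (intro continuous_at_imp_continuous_on ballI prate_isCont[OF assms(1,2)]) auto
  have me: "prate c X i \<in> borel_measurable (lebesgue_on {0<..s})"
    by (rule continuous_imp_measurable_on_sets_lebesgue[OF co]) auto
  have ci: "(\<lambda>_. 1 / c i) integrable_on {0..s}" by (rule integrable_continuous_interval) auto
  have ci2: "(\<lambda>_. 1 / c i) integrable_on {0<..s}"
    by (rule integrable_spike_set[OF ci]) (auto intro: negligible_subset[of "{0}"])
  have "prate c X i integrable_on {0<..s}"
    by (rule measurable_bounded_by_integrable_imp_integrable_real[OF me ci2])
       (use prate_bounds[OF assms] in auto)
  then show ?thesis
    by (rule integrable_spike_set) (auto intro: negligible_subset[of "{0}"])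
qed

lemma cum_rate_isCont:
  assumes "gccp_feasible n c X" "i < n" "c i > 0" "t > 0"
  shows "isCont (cum_rate c X i) t"
proof -
  have "continuous_on {0..t+1} (cum_rate c X i)"
    unfolding cum_rate_def[abs_def]
    by (rule indefinite_integral_continuous_1[OF prate_integrable[OF assms(1-3)]])
  then show ?thesis
    by (rule continuous_on_interior) (use assms in auto)
qed

lemma cum_rate_0: "cum_rate c X i 0 = 0"
  by (simp add: cum_rate_def)

lemma cum_rate_nonneg:
  assumes "gccp_feasible n c X" "i < n" "c i > 0"
  shows "0 \<le> cum_rate c X i t"
  unfolding cum_rate_def
  by (rule integral_nonneg[OF prate_integrable[OF assms]]) (use prate_bounds[OF assms] in auto)

lemma cum_rate_sum:
  assumes "gccp_feasible n c X" "\<And>i. i < n \<Longrightarrow> c i > 0" "t \<ge> 0"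
  shows "(\<Sum>i<n. c i * cum_rate c X i t) \<le> t"
proof -
  have int: "\<And>i. i \<in> {..<n} \<Longrightarrow> (\<lambda>\<tau>. c i * prate c X i \<tau>) integrable_on {0..t}"
    using integrable_cmul[OF prate_integrable[OF assms(1) _ assms(2)]] by auto
  have eq: "\<And>i \<tau>. i < n \<Longrightarrow> c i * prate c X i \<tau> = xbar c X i (\<tau>/2)"
  proof -
    fix i \<tau> assume "i < n" then have "c i > 0" using assms(2) by auto
    then show "c i * prate c X i \<tau> = xbar c X i (\<tau>/2)" unfolding prate_def by (auto simp: field_simps)
  qed
  have "(\<Sum>i<n. c i * cum_rate c X i t) = (\<Sum>i<n. integral {0..t} (\<lambda>\<tau>. c i * prate c X i \<tau>))"
    unfolding cum_rate_def by (simp add: integral_mult_right)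
  also have "\<dots> = integral {0..t} (\<lambda>\<tau>. \<Sum>i<n. c i * prate c X i \<tau>)"
    by (rule integral_sum[OF finite_lessThan int, symmetric])
  also have "\<dots> \<le> integral {0..t} (\<lambda>_. 1::real)"
  proof (rule integral_le)
    show "(\<lambda>\<tau>. \<Sum>i<n. c i * prate c X i \<tau>) integrable_on {0..t}" by (rule integrable_sum[OF _ int]) auto
    fix \<tau> assume "\<tau> \<in> {0..t}"
    then show "(\<Sum>i<n. c i * prate c X i \<tau>) \<le> 1"
      using xbar_sum[OF assms(1,2), of "\<tau>/2"] eq by auto
  qed auto
  also have "\<dots> = t" using assms(3) by simp
  finally show ?thesis .
qed

lemma (in prob_space) distr_atMost:
  assumes am: "a \<in> borel_measurable M" and t: "t \<ge> 0"
    and h: "measure M {\<omega> \<in> space M. a \<omega> > ennreal t} = exp (- C t)"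
  shows "emeasure (distr M borel a) {..ennreal t} = ennreal (1 - exp (- C t))"
proof -
  have "emeasure (distr M borel a) {..ennreal t} = emeasure M (a -` {..ennreal t} \<inter> space M)"
    by (rule emeasure_distr[OF am]) auto
  also have "a -` {..ennreal t} \<inter> space M = space M - {\<omega> \<in> space M. a \<omega> > ennreal t}"
    by (auto simp: not_less)
  also have "emeasure M \<dots> = ennreal (prob (space M - {\<omega> \<in> space M. a \<omega> > ennreal t}))"
    by (rule emeasure_eq_measure)
  also have "prob (space M - {\<omega> \<in> space M. a \<omega> > ennreal t}) = 1 - exp (- C t)"
    using prob_compl[of "{\<omega> \<in> space M. a \<omega> > ennreal t}"] h am by auto
  finally show ?thesis .
qed

lemma (in prob_space) distr_atom:
  assumes am: "a \<in> borel_measurable M" and t: "t \<ge> 0"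
    and h: "\<And>\<tau>. \<tau> \<ge> 0 \<Longrightarrow> measure M {\<omega> \<in> space M. a \<omega> > ennreal \<tau>} = exp (- C \<tau>)"
    and C0: "C 0 = 0" and Cc: "\<And>t. t > 0 \<Longrightarrow> isCont C t"
  shows "emeasure (distr M borel a) {ennreal t} = 0"
proof -
  have "emeasure (distr M borel a) {ennreal t} = emeasure M (a -` {ennreal t} \<inter> space M)"
    by (rule emeasure_distr[OF am]) auto
  also have "\<dots> = ennreal (prob {\<omega> \<in> space M. a \<omega> = ennreal t})"
    by (subst emeasure_eq_measure) (auto intro!: arg_cong[where f=prob])
  also have "prob {\<omega> \<in> space M. a \<omega> = ennreal t} = 0"
  proof (cases "t = 0")
    case True
    have "prob {\<omega> \<in> space M. a \<omega> = ennreal t} \<le> prob (space M - {\<omega> \<in> space M. a \<omega> > ennreal 0})"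
      using am True by (intro finite_measure_mono) auto
    also have "\<dots> = 0" using prob_compl[of "{\<omega> \<in> space M. a \<omega> > ennreal 0}"] h[of 0] am C0 by auto
    finally show ?thesis by (simp add: measure_nonneg order_antisym)
  next
    case False
    then have tp: "t > 0" using t by auto
    have ct: "isCont (\<lambda>s. exp (- C s) - exp (- C t)) t" using Cc[OF tp] by (intro continuous_intros) auto
    then have "((\<lambda>s. exp (- C s) - exp (- C t)) \<longlongrightarrow> 0) (at t)"
      using ct unfolding isCont_def by simp
    then have lim: "((\<lambda>s. exp (- C s) - exp (- C t)) \<longlongrightarrow> 0) (at_left t)"
      by (rule filterlim_mono[OF _ order_refl at_le]) simp
    have ev: "eventually (\<lambda>s. prob {\<omega> \<in> space M. a \<omega> = ennreal t} \<le> exp (- C s) - exp (- C t)) (at_left t)"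
    proof -
      have "eventually (\<lambda>s. s \<in> {0<..<t}) (at_left t)" using eventually_at_left_real[OF tp] .
      then show ?thesis
      proof (rule eventually_mono)
        fix s assume s: "s \<in> {0<..<t}"
        have "prob {\<omega> \<in> space M. a \<omega> = ennreal t} \<le> prob ({\<omega> \<in> space M. a \<omega> > ennreal s} - {\<omega> \<in> space M. a \<omega> > ennreal t})"
          using am s by (intro finite_measure_mono) (auto simp: ennreal_less_iff)
        also have "\<dots> = prob {\<omega> \<in> space M. a \<omega> > ennreal s} - prob {\<omega> \<in> space M. a \<omega> > ennreal t}"
        proof (intro finite_measure_Diff)
          show "{\<omega> \<in> space M. a \<omega> > ennreal t} \<subseteq> {\<omega> \<in> space M. a \<omega> > ennreal s}"
          proof safe
            fix x assume "x \<in> space M" "ennreal t < a x"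
            moreover have "ennreal s < ennreal t" using s by (auto simp: ennreal_less_iff)
            ultimately show "ennreal s < a x" by (meson less_trans)
          qed
        qed (use am in auto)
        also have "\<dots> = exp (- C s) - exp (- C t)" using h s t by auto
        finally show "prob {\<omega> \<in> space M. a \<omega> = ennreal t} \<le> exp (- C s) - exp (- C t)" .
      qed
    qed
    have "prob {\<omega> \<in> space M. a \<omega> = ennreal t} \<le> 0"
      by (rule tendsto_le[OF _ lim tendsto_const ev]) simp
    then show ?thesis by (simp add: measure_nonneg order_antisym)
  qed
  finally show ?thesis by simp
qed

lemma ennreal_between_rats:
  fixes a b :: ennreal
  assumes "a < b"
  shows "\<exists>q r :: rat. 0 \<le> q \<and> q < r \<and> a \<le> ennreal (of_rat q) \<and> ennreal (of_rat r) \<le> b"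
proof -
  have "a \<noteq> top" using assms by auto
  then obtain a' where a': "a = ennreal a'" "a' \<ge> 0" by (cases a) auto
  show ?thesis
  proof (cases "b = top")
    case True
    obtain q where q: "q \<in> \<rat>" "a' < q" "q < a' + 1" using Rats_dense_in_real[of a' "a'+1"] by auto
    then obtain q' where qq: "q = of_rat q'" by (auto simp: Rats_def)
    have "0 \<le> q'" using q(2) a'(2) qq by (metis less_eq_real_def order_trans zero_le_of_rat_iff)
    moreover have "a \<le> ennreal (of_rat q')" using q(2) a' qq by (auto intro: ennreal_leI)
    ultimately show ?thesis using True
      by (intro exI[of _ q'] exI[of _ "q'+1"]) auto
  next
    case False
    then obtain b' where b': "b = ennreal b'" "b' \<ge> 0" by (cases b) auto
    have ab: "a' < b'" using assms a' b' by (auto simp: ennreal_less_iff)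
    obtain q where q: "q \<in> \<rat>" "a' < q" "q < b'" using Rats_dense_in_real[OF ab] by auto
    obtain r where r: "r \<in> \<rat>" "q < r" "r < b'" using Rats_dense_in_real[OF q(3)] by auto
    obtain q' where q': "q = of_rat q'" using q by (auto simp: Rats_def)
    obtain r' where r': "r = of_rat r'" using r by (auto simp: Rats_def)
    have "0 \<le> q'" using q(2) a'(2) q' by (metis less_eq_real_def order_trans zero_le_of_rat_iff)
    moreover have "a \<le> ennreal (of_rat q')" using q(2) a' q' by (auto intro: ennreal_leI)
    moreover have "ennreal (of_rat r') \<le> b" using r(3) b' r' by (auto intro: ennreal_leI)
    moreover have "q' < r'" using q' r' r(2) by (simp add: of_rat_less)
    ultimately show ?thesis
      by (intro exI[of _ q'] exI[of _ r']) auto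
  qed
qed

lemma cond_le:
  assumes sf: "sigma_finite_subalgebra M F" and fm: "finite_measure M"
    and fmeas[measurable]: "f \<in> borel_measurable M" and gmeas[measurable]: "g \<in> borel_measurable F"
    and le: "\<And>A. A \<in> sets F \<Longrightarrow> (\<integral>\<^sup>+x. indicator A x * f x \<partial>M) \<le> (\<integral>\<^sup>+x. indicator A x * g x \<partial>M)"
  shows "AE x in M. nn_cond_exp M F f x \<le> g x"
proof -
  interpret sigma_finite_subalgebra M F by (rule sf)
  interpret fin: finite_measure M by (rule fm)
  define h where "h = nn_cond_exp M F f"
  have hmeas[measurable]: "h \<in> borel_measurable F" unfolding h_def by simp
  have sF: "space F = space M" "sets F \<subseteq> sets M" using subalg unfolding subalgebra_def by auto
  have gM[measurable]: "g \<in> borel_measurable M" by (rule measurable_from_subalg[OF subalg gmeas])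
  have hM[measurable]: "h \<in> borel_measurable M" unfolding h_def by simp
  have hle: "(\<integral>\<^sup>+x. indicator A x * h x \<partial>M) \<le> (\<integral>\<^sup>+x. indicator A x * g x \<partial>M)" if A: "A \<in> sets F" for A
  proof -
    have "(\<integral>\<^sup>+x. indicator A x * h x \<partial>M) = (\<integral>\<^sup>+x. indicator A x * f x \<partial>M)"
      unfolding h_def by (rule nn_cond_exp_intg) (use A in auto)
    then show ?thesis using le[OF A] by simp
  qed
  have null: "AE x in M. \<not> (g x \<le> ennreal (of_rat q) \<and> ennreal (of_rat r) \<le> h x)"
    if qr: "0 \<le> q" "q < r" for q r :: rat
  proof -
    define B where "B = {x \<in> space M. g x \<le> ennreal (of_rat q) \<and> ennreal (of_rat r) \<le> h x}"
    have BF: "B \<in> sets F" unfolding B_def sF(1)[symmetric] by measurable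
    then have BM: "B \<in> sets M" using sF by auto
    have "ennreal (of_rat r) * emeasure M B = (\<integral>\<^sup>+x. indicator B x * ennreal (of_rat r) \<partial>M)"
      using BM by (simp add: nn_integral_cmult_indicator mult.commute)
    also have "\<dots> \<le> (\<integral>\<^sup>+x. indicator B x * h x \<partial>M)"
      by (rule nn_integral_mono) (auto simp: B_def split: split_indicator)
    also have "\<dots> \<le> (\<integral>\<^sup>+x. indicator B x * g x \<partial>M)" by (rule hle[OF BF])
    also have "\<dots> \<le> (\<integral>\<^sup>+x. indicator B x * ennreal (of_rat q) \<partial>M)"
      by (rule nn_integral_mono) (auto simp: B_def split: split_indicator)
    also have "\<dots> = ennreal (of_rat q) * emeasure M B"
      using BM by (simp add: nn_integral_cmult_indicator mult.commute)
    finally have ineq: "ennreal (of_rat r) * emeasure M B \<le> ennreal (of_rat q) * emeasure M B" .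
    have "emeasure M B = 0"
    proof (rule ccontr)
      assume ne: "emeasure M B \<noteq> 0"
      have "emeasure M B = ennreal (measure M B)" by (rule fin.emeasure_eq_measure)
      with ne have mpos: "measure M B > 0" by (simp add: measure_nonneg order_le_neq_trans)
      have "ennreal (of_rat r * measure M B) \<le> ennreal (of_rat q * measure M B)"
        using ineq \<open>emeasure M B = ennreal (measure M B)\<close> qr
        by (simp add: ennreal_mult zero_le_of_rat_iff)
      then have "of_rat r * measure M B \<le> (of_rat q * measure M B :: real)"
        using qr mpos by (subst (asm) ennreal_le_iff) (auto simp: zero_le_of_rat_iff)
      then have "(of_rat r :: real) \<le> of_rat q" using mpos by simp
      then show False using qr by (simp add: of_rat_less_eq not_le[symmetric])
    qed
    then show ?thesis
      by (subst AE_iff_measurable[OF BM]) (auto simp: B_def)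
  qed
  have "AE x in M. \<forall>q r :: rat. 0 \<le> q \<and> q < r \<longrightarrow> \<not> (g x \<le> ennreal (of_rat q) \<and> ennreal (of_rat r) \<le> h x)"
    using null by (simp add: AE_all_countable)
  then show ?thesis
  proof (rule eventually_mono)
    fix x assume *: "\<forall>q r :: rat. 0 \<le> q \<and> q < r \<longrightarrow> \<not> (g x \<le> ennreal (of_rat q) \<and> ennreal (of_rat r) \<le> h x)"
    show "nn_cond_exp M F f x \<le> g x"
    proof (rule ccontr)
      assume "\<not> nn_cond_exp M F f x \<le> g x"
      then have "g x < h x" unfolding h_def by simp
      then show False using ennreal_between_rats[of "g x" "h x"] * by blast
    qed
  qed
qed

lemma tau_star_cong:
  assumes "\<And>k. k < n \<Longrightarrow> tau_box c v \<alpha> k \<omega> = tau_box c v \<alpha>2 k \<omega>2"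
  shows "tau_star n c v \<alpha> \<omega> = tau_star n c v \<alpha>2 \<omega>2"
  unfolding tau_star_def using assms by (intro arg_cong[where f=Min] image_cong) auto

lemma i_star_cong:
  assumes "\<And>k. k < n \<Longrightarrow> tau_box c v \<alpha> k \<omega> = tau_box c v \<alpha>2 k \<omega>2"
  shows "i_star n c v \<alpha> \<omega> = i_star n c v \<alpha>2 \<omega>2"
proof -
  have T: "tau_star n c v \<alpha> \<omega> = tau_star n c v \<alpha>2 \<omega>2" by (rule tau_star_cong[OF assms])
  show ?thesis unfolding i_star_def T by (rule arg_cong[where f=Least], rule ext) (use assms in auto)
qed

lemma tau_star_le: "k < n \<Longrightarrow> tau_star n c v \<alpha> \<omega> \<le> tau_box c v \<alpha> k \<omega>"
  unfolding tau_star_def by (intro Min_le) auto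

lemma tau_star_ex: "n > 0 \<Longrightarrow> \<exists>k<n. tau_box c v \<alpha> k \<omega> = tau_star n c v \<alpha> \<omega>"
proof -
  assume "n > 0"
  then have "tau_star n c v \<alpha> \<omega> \<in> (\<lambda>i. tau_box c v \<alpha> i \<omega>) ` {..<n}"
    unfolding tau_star_def by (intro Min_in) auto
  then show ?thesis by auto
qed

lemma i_star_props:
  assumes "n > 0"
  shows "i_star n c v \<alpha> \<omega> < n \<and> tau_box c v \<alpha> (i_star n c v \<alpha> \<omega>) \<omega> = tau_star n c v \<alpha> \<omega>"
  unfolding i_star_def using tau_star_ex[OF assms] by (rule LeastI_ex)

lemma i_star_least:
  "k < n \<Longrightarrow> tau_box c v \<alpha> k \<omega> = tau_star n c v \<alpha> \<omega> \<Longrightarrow> i_star n c v \<alpha> \<omega> \<le> k"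
  unfolding i_star_def by (rule Least_le) auto

abbreviation proj :: "nat \<Rightarrow> (nat \<Rightarrow> ennreal) \<Rightarrow> ennreal" where "proj \<equiv> (\<lambda>i x. x i)"

lemma tb_proj: "tau_box c v proj i x = max (x i) (ennreal (beta c v i))"
  unfolding tau_box_def ..

lemma tb_upd_other: "k \<noteq> j \<Longrightarrow> tau_box c v proj k (y(j:=a)) = tau_box c v proj k (y(j:=b))"
  unfolding tb_proj by simp

lemma fiber_same:
  assumes n: "n > 0" and j: "j < n"
    and a: "i_star n c v proj (y(j:=a)) \<noteq> j" and b: "i_star n c v proj (y(j:=b)) \<noteq> j"
  shows "i_star n c v proj (y(j:=a)) = i_star n c v proj (y(j:=b)) \<and>
         tau_star n c v proj (y(j:=a)) = tau_star n c v proj (y(j:=b))"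
proof -
  let ?x = "y(j:=a)" and ?z = "y(j:=b)"
  define i where "i = i_star n c v proj ?x"
  define k where "k = i_star n c v proj ?z"
  have i: "i < n" "tau_box c v proj i ?x = tau_star n c v proj ?x" using i_star_props[OF n, of c v proj ?x] unfolding i_def by auto
  have k: "k < n" "tau_box c v proj k ?z = tau_star n c v proj ?z" using i_star_props[OF n, of c v proj ?z] unfolding k_def by auto
  have ij: "i \<noteq> j" "k \<noteq> j" using a b unfolding i_def k_def by auto
  have "tau_star n c v proj ?z \<le> tau_box c v proj i ?z" by (rule tau_star_le[OF i(1)])
  also have "\<dots> = tau_box c v proj i ?x" using tb_upd_other[OF ij(1)] by metis
  finally have 1: "tau_star n c v proj ?z \<le> tau_star n c v proj ?x" using i by simp
  have "tau_star n c v proj ?x \<le> tau_box c v proj k ?x" by (rule tau_star_le[OF k(1)])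
  also have "\<dots> = tau_box c v proj k ?z" using tb_upd_other[OF ij(2)] by metis
  finally have 2: "tau_star n c v proj ?x \<le> tau_star n c v proj ?z" using k by simp
  have T: "tau_star n c v proj ?x = tau_star n c v proj ?z" using 1 2 by simp
  have "k \<le> i" unfolding k_def
    by (rule i_star_least[OF i(1)]) (metis T i(2) ij(1) tb_upd_other)
  moreover have "i \<le> k" unfolding i_def
    by (rule i_star_least[OF k(1)]) (metis T k(2) ij(2) tb_upd_other)
  ultimately show ?thesis using T unfolding i_def k_def by simp
qed

lemma same_tb_jump:
  assumes "max a (ennreal (beta c v j)) = max b (ennreal (beta c v j))"
  shows "i_star n c v proj (y(j:=a)) = i_star n c v proj (y(j:=b))"
    "tau_star n c v proj (y(j:=a)) = tau_star n c v proj (y(j:=b))"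
proof -
  have *: "\<And>k. k < n \<Longrightarrow> tau_box c v proj k (y(j:=a)) = tau_box c v proj k (y(j:=b))"
    using assms unfolding tb_proj by auto
  show "i_star n c v proj (y(j:=a)) = i_star n c v proj (y(j:=b))" by (rule i_star_cong[OF *])
  show "tau_star n c v proj (y(j:=a)) = tau_star n c v proj (y(j:=b))" by (rule tau_star_cong[OF *])
qed

lemma fiber_up:
  assumes n: "n > 0" and j: "j < n"
    and a: "i_star n c v proj (y(j:=a)) \<noteq> j" and ab: "a \<le> b"
  shows "i_star n c v proj (y(j:=b)) \<noteq> j"
proof
  assume bj: "i_star n c v proj (y(j:=b)) = j"
  let ?x = "y(j:=a)" and ?z = "y(j:=b)"
  define i where "i = i_star n c v proj ?x"
  have i: "i < n" "tau_box c v proj i ?x = tau_star n c v proj ?x" using i_star_props[OF n, of c v proj ?x] unfolding i_def by auto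
  have ij: "i \<noteq> j" using a unfolding i_def by auto
  have zj: "tau_box c v proj j ?z = tau_star n c v proj ?z" using i_star_props[OF n, of c v proj ?z] bj by simp
  have "tau_box c v proj j ?z = tau_star n c v proj ?z" by (rule zj)
  also have "\<dots> \<le> tau_box c v proj i ?z" by (rule tau_star_le[OF i(1)])
  also have "\<dots> = tau_box c v proj i ?x" using tb_upd_other[OF ij] by metis
  also have "\<dots> = tau_star n c v proj ?x" by (rule i(2))
  also have "\<dots> \<le> tau_box c v proj j ?x" by (rule tau_star_le[OF j])
  finally have le: "tau_box c v proj j ?z \<le> tau_box c v proj j ?x" .
  have "tau_box c v proj j ?x \<le> tau_box c v proj j ?z" using max.mono[OF ab order_refl, of "ennreal (beta c v j)"] unfolding tb_proj by simp
  with le have "max a (ennreal (beta c v j)) = max b (ennreal (beta c v j))" unfolding tb_proj fun_upd_same by (rule antisym[rotated])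
  from same_tb_jump(1)[OF this, of n y] a bj show False by simp
qed

lemma fiber_all:
  assumes n: "n > 0" and j: "j < n"
    and a: "i_star n c v proj (y(j:=a)) \<noteq> j" and lt: "a < tau_star n c v proj (y(j:=a))"
  shows "i_star n c v proj (y(j:=b)) \<noteq> j"
proof (cases "a \<le> b")
  case True then show ?thesis using fiber_up[OF n j a] by simp
next
  case False
  have "tau_star n c v proj (y(j:=a)) \<le> tau_box c v proj j (y(j:=a))" by (rule tau_star_le[OF j])
  then have "a < max a (ennreal (beta c v j))" using lt unfolding tb_proj by simp
  then have ba: "a < ennreal (beta c v j)" by (simp add: less_max_iff_disj)
  then have "max a (ennreal (beta c v j)) = max b (ennreal (beta c v j))" using False by (auto simp: max_def)
  from same_tb_jump(1)[OF this, of n y] a show ?thesis by simp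
qed

lemma upset_borel:
  fixes U :: "ennreal set"
  assumes up: "\<And>a b. a \<in> U \<Longrightarrow> a \<le> b \<Longrightarrow> b \<in> U"
  shows "U \<in> sets borel"
proof (cases "Inf U \<in> U")
  case True
  have "U = {Inf U..}" using up True by (auto intro: Inf_lower)
  then show ?thesis by (metis borel_closed closed_atLeast)
next
  case False
  have "U = {Inf U<..}"
  proof safe
    fix x assume "x \<in> U"
    then show "Inf U < x" using False by (metis Inf_lower order_le_neq_trans)
  next
    fix x assume "Inf U < x"
    then obtain b where "b \<in> U" "b < x" by (auto simp: Inf_less_iff)
    then show "x \<in> U" using up by auto
  qed
  then show ?thesis by (metis borel_open open_greaterThan)
qed

locale core_setup =
  fixes n :: nat and c v :: "nat \<Rightarrow> real" and D :: "nat \<Rightarrow> ennreal measure"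
  assumes n_pos: "n > 0"
    and c_pos: "\<And>i. i < n \<Longrightarrow> c i > 0"
    and v_nonneg: "\<And>i. i < n \<Longrightarrow> v i \<ge> 0"
    and sets_D: "\<And>i. sets (D i) = sets borel"
    and prob_D: "\<And>i. prob_space (D i)"
    and atom: "\<And>j t. j < n \<Longrightarrow> t \<ge> 0 \<Longrightarrow> emeasure (D j) {ennreal t} = 0"
    and sumb: "\<And>t. t \<ge> 0 \<Longrightarrow> (\<Sum>j<n. ennreal (c j) * emeasure (D j) {..ennreal t}) \<le> ennreal t"
begin

abbreviation "P \<equiv> PiM {..<n} D"
abbreviation "TS \<equiv> tau_star n c v proj"
abbreviation "IS \<equiv> i_star n c v proj"

lemma comp_meas[measurable]: "i < n \<Longrightarrow> (\<lambda>x. x i) \<in> borel_measurable P"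
  using measurable_component_singleton[of i "{..<n}" D] by (simp add: measurable_cong_sets[OF refl sets_D])

lemma tb_meas[measurable]: "i < n \<Longrightarrow> (\<lambda>x. tau_box c v proj i x) \<in> borel_measurable P"
  unfolding tb_proj by measurable

lemma TS_meas[measurable]: "TS \<in> borel_measurable P"
  unfolding tau_star_def by (rule borel_measurable_Min) auto

lemma IS_meas[measurable]: "IS \<in> measurable P (count_space UNIV)"
  unfolding i_star_def
proof (rule measurable_Least)
  fix i
  show "(\<lambda>x. i < n \<and> tau_box c v proj i x = TS x) \<in> measurable P (count_space UNIV)"
  proof (cases "i < n")
    case True
    have "{x \<in> space P. tau_box c v proj i x = TS x} \<in> sets P"
      by (rule borel_measurable_eq[OF tb_meas[OF True] TS_meas])
    then show ?thesis using True by (simp add: pred_def)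
  next
    case False then show ?thesis by simp
  qed
qed

lemma pair_meas: "(\<lambda>x. (IS x, TS x)) \<in> measurable P (count_space UNIV \<Otimes>\<^sub>M borel)"
  by measurable

lemma ind_meas: "S \<in> sets (count_space UNIV \<Otimes>\<^sub>M borel) \<Longrightarrow> (\<lambda>x. indicator S (IS x, TS x) :: ennreal) \<in> borel_measurable P"
  using measurable_compose[OF pair_meas borel_measurable_indicator[of S]] by simp

lemma F_meas: "j < n \<Longrightarrow> (\<lambda>t. emeasure (D j) {..t}) \<in> borel_measurable borel"
proof -
  assume j: "j < n"
  interpret prob_space "D j" by (rule prob_D)
  have Q: "{(t, a). a \<le> t} \<in> sets (borel \<Otimes>\<^sub>M D j)"
  proof -
    have "{(t, a). a \<le> t} \<in> sets (borel \<Otimes>\<^sub>M (borel :: ennreal measure))"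
    proof -
      have "{p \<in> space (borel \<Otimes>\<^sub>M (borel :: ennreal measure)). snd p \<le> fst p} \<in> sets (borel \<Otimes>\<^sub>M (borel :: ennreal measure))"
        by (rule borel_measurable_le) measurable
      moreover have "{p. snd p \<le> fst p} = {(t, a::ennreal). a \<le> t}" by auto
      ultimately show ?thesis by (simp add: space_pair_measure)
    qed
    moreover have "sets ((borel :: ennreal measure) \<Otimes>\<^sub>M D j) = sets ((borel :: ennreal measure) \<Otimes>\<^sub>M (borel :: ennreal measure))"
      by (rule sets_pair_measure_cong[OF refl sets_D])
    ultimately show ?thesis by simp
  qed
  have "(\<lambda>t. emeasure (D j) (Pair t -` {(t, a). a \<le> t})) \<in> borel_measurable borel"
    by (rule measurable_emeasure_Pair[OF Q])
  moreover have "\<And>t. Pair t -` {(t, a). a \<le> t} = {..t}" by auto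
  ultimately show ?thesis by (simp add: atMost_def)
qed

definition "Lf j S x = indicator S (IS x, TS x) * ennreal (c j) * (if x j \<le> TS x \<and> IS x \<noteq> j then 1 else 0)"
definition "Rf j S x = indicator S (IS x, TS x) * ennreal (c j) * emeasure (D j) {..TS x}"

lemma Lf_meas: "j < n \<Longrightarrow> S \<in> sets (count_space UNIV \<Otimes>\<^sub>M borel) \<Longrightarrow> Lf j S \<in> borel_measurable P"
proof -
  assume j: "j < n" and S: "S \<in> sets (count_space UNIV \<Otimes>\<^sub>M borel)"
  have 1: "(\<lambda>x. indicator S (IS x, TS x) :: ennreal) \<in> borel_measurable P" by (rule ind_meas[OF S])
  have "{x \<in> space P. x j \<le> TS x} \<in> sets P" by (rule borel_measurable_le[OF comp_meas[OF j] TS_meas])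
  moreover have "IS -` (UNIV - {j}) \<inter> space P \<in> sets P" by (rule measurable_sets[OF IS_meas]) auto
  ultimately have "{x \<in> space P. x j \<le> TS x} \<inter> (IS -` (UNIV - {j}) \<inter> space P) \<in> sets P" by auto
  moreover have "{x \<in> space P. x j \<le> TS x} \<inter> (IS -` (UNIV - {j}) \<inter> space P) = {x \<in> space P. x j \<le> TS x \<and> IS x \<noteq> j}" by auto
  ultimately have pr: "{x \<in> space P. x j \<le> TS x \<and> IS x \<noteq> j} \<in> sets P" by simp
  have 2: "(\<lambda>x. if x j \<le> TS x \<and> IS x \<noteq> j then 1 else 0 :: ennreal) \<in> borel_measurable P"
    by (rule measurable_If[OF measurable_const measurable_const pr]) auto
  show ?thesis unfolding Lf_def[abs_def]
    by (intro borel_measurable_times_ennreal 1 2 measurable_const) auto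
qed

lemma Rf_meas: "j < n \<Longrightarrow> S \<in> sets (count_space UNIV \<Otimes>\<^sub>M borel) \<Longrightarrow> Rf j S \<in> borel_measurable P"
proof -
  assume j: "j < n" and S: "S \<in> sets (count_space UNIV \<Otimes>\<^sub>M borel)"
  have 1: "(\<lambda>x. indicator S (IS x, TS x) :: ennreal) \<in> borel_measurable P" by (rule ind_meas[OF S])
  have 2: "(\<lambda>x. emeasure (D j) {..TS x}) \<in> borel_measurable P" using measurable_compose[OF TS_meas F_meas[OF j]] by simp
  show ?thesis unfolding Rf_def[abs_def]
    by (intro borel_measurable_times_ennreal 1 2 measurable_const) auto
qed

lemma space_D: "space (D i) = UNIV"
  using sets_eq_imp_space_eq[OF sets_D[of i]] by simp

lemma fiber_ineq:
  assumes j: "j < n"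
  shows "(\<integral>\<^sup>+a. Lf j S (y(j:=a)) \<partial>D j) \<le> (\<integral>\<^sup>+a. Rf j S (y(j:=a)) \<partial>D j)"
proof (cases "\<exists>a0. IS (y(j:=a0)) \<noteq> j")
  case False
  then have "\<And>a. Lf j S (y(j:=a)) = 0" unfolding Lf_def by auto
  then show ?thesis by simp
next
  case True
  then obtain a0 where a0: "IS (y(j:=a0)) \<noteq> j" by auto
  interpret Dj: prob_space "D j" by (rule prob_D)
  define U where "U = {a. IS (y(j:=a)) \<noteq> j}"
  define T0 where "T0 = TS (y(j:=a0))"
  define i0 where "i0 = IS (y(j:=a0))"
  define K where "K = indicator S (i0, T0) * ennreal (c j)"
  have up: "\<And>a b. a \<in> U \<Longrightarrow> a \<le> b \<Longrightarrow> b \<in> U"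
    unfolding U_def using fiber_up[OF n_pos j] by blast
  have Ub: "U \<in> sets (D j)" using upset_borel[OF up] sets_D by simp
  have UTb: "U \<inter> {..T0} \<in> sets (D j)" using Ub sets_D by simp
  have inU: "IS (y(j:=a)) = i0 \<and> TS (y(j:=a)) = T0" if "a \<in> U" for a
    using fiber_same[OF n_pos j _ a0, of a] that unfolding U_def i0_def T0_def by auto
  have Leq: "Lf j S (y(j:=a)) = K * indicator (U \<inter> {..T0}) a" for a
  proof (cases "a \<in> U")
    case True
    then have "IS (y(j:=a)) \<noteq> j" unfolding U_def by simp
    then show ?thesis using inU[OF True] True unfolding Lf_def K_def by (auto split: split_indicator)
  next
    case False then show ?thesis unfolding Lf_def K_def U_def by (auto split: split_indicator)
  qed
  have Rge: "K * emeasure (D j) {..T0} * indicator U a \<le> Rf j S (y(j:=a))" for a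
  proof (cases "a \<in> U")
    case True then show ?thesis using inU[OF True] unfolding Rf_def K_def by (auto split: split_indicator)
  next
    case False then show ?thesis by (auto split: split_indicator)
  qed
  have key: "emeasure (D j) (U \<inter> {..T0}) \<le> emeasure (D j) {..T0} * emeasure (D j) U"
  proof (cases "\<forall>b. b \<in> U")
    case True
    then have "U = space (D j)" using space_D by auto
    then show ?thesis using Dj.emeasure_space_1 by (simp add: space_D)
  next
    case notall: False
    show ?thesis
    proof (cases "T0 = top")
      case True
      have "{..T0} = space (D j)" using True space_D by auto
      then show ?thesis using Dj.emeasure_space_1 by (simp add: space_D)
    next
      case False
      then obtain t where t: "T0 = ennreal t" "t \<ge> 0" by (cases T0) auto
      have "U \<inter> {..T0} \<subseteq> {T0}"
      proof
        fix a assume a: "a \<in> U \<inter> {..T0}"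
        have "\<not> a < T0"
        proof
          assume "a < T0"
          then have "a < TS (y(j:=a))" using inU a by auto
          then have "\<forall>b. b \<in> U" using fiber_all[OF n_pos j] a unfolding U_def by blast
          then show False using notall by simp
        qed
        then show "a \<in> {T0}" using a by auto
      qed
      then have "emeasure (D j) (U \<inter> {..T0}) \<le> emeasure (D j) {T0}"
        by (intro emeasure_mono) (auto simp: sets_D)
      also have "\<dots> = 0" using atom[OF j t(2)] t(1) by simp
      finally show ?thesis by simp
    qed
  qed
  have "(\<integral>\<^sup>+a. Lf j S (y(j:=a)) \<partial>D j) = K * emeasure (D j) (U \<inter> {..T0})"
    unfolding Leq by (rule nn_integral_cmult_indicator[OF UTb])
  also have "\<dots> \<le> K * (emeasure (D j) {..T0} * emeasure (D j) U)"
    by (rule mult_left_mono[OF key]) simp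
  also have "\<dots> = (\<integral>\<^sup>+a. (K * emeasure (D j) {..T0}) * indicator U a \<partial>D j)"
    by (subst nn_integral_cmult_indicator[OF Ub]) (simp add: mult.assoc)
  also have "\<dots> \<le> (\<integral>\<^sup>+a. Rf j S (y(j:=a)) \<partial>D j)"
    by (rule nn_integral_mono) (use Rge in auto)
  finally show ?thesis .
qed

lemma per_j:
  assumes j: "j < n" and S: "S \<in> sets (count_space UNIV \<Otimes>\<^sub>M borel)"
  shows "integral\<^sup>N P (Lf j S) \<le> integral\<^sup>N P (Rf j S)"
proof -
  interpret PS: product_sigma_finite D
    unfolding product_sigma_finite_def using prob_D by (blast intro: prob_space_imp_sigma_finite)
  define J where "J = {..<n} - {j}"
  have eqI: "insert j J = {..<n}" and fJ: "finite J" and jJ: "j \<notin> J" using j unfolding J_def by blast+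
  have "integral\<^sup>N P (Lf j S) = integral\<^sup>N (PiM (insert j J) D) (Lf j S)" using eqI by simp
  also have "\<dots> = (\<integral>\<^sup>+y. (\<integral>\<^sup>+a. Lf j S (y(j:=a)) \<partial>D j) \<partial>PiM J D)"
    by (rule PS.product_nn_integral_insert[OF fJ jJ]) (use Lf_meas[OF j S] eqI in simp)
  also have "\<dots> \<le> (\<integral>\<^sup>+y. (\<integral>\<^sup>+a. Rf j S (y(j:=a)) \<partial>D j) \<partial>PiM J D)"
    by (rule nn_integral_mono) (rule fiber_ineq[OF j])
  also have "\<dots> = integral\<^sup>N (PiM (insert j J) D) (Rf j S)"
    by (rule PS.product_nn_integral_insert[OF fJ jJ, symmetric]) (use Rf_meas[OF j S] eqI in simp)
  also have "\<dots> = integral\<^sup>N P (Rf j S)" using eqI by simp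
  finally show ?thesis .
qed

lemma obj_eq:
  "objective n c v proj x = ennreal (beta c v (IS x)) +
     (\<Sum>j<n. ennreal (c j) * (if x j \<le> TS x \<and> IS x \<noteq> j then 1 else 0))"
proof -
  define W where "W = {j. j < n \<and> x j \<le> TS x}"
  have isp: "IS x < n" "tau_box c v proj (IS x) x = TS x" using i_star_props[OF n_pos, of c v proj x] by auto
  have "x (IS x) \<le> TS x" using isp(2) unfolding tb_proj by (metis max.cobounded1)
  then have inW: "IS x \<in> W" using isp unfolding W_def by auto
  have fW: "finite W" unfolding W_def by auto
  have "(\<Sum>j\<in>W. c j) = c (IS x) + (\<Sum>j\<in>W - {IS x}. c j)" by (rule sum.remove[OF fW inW])
  also have "W - {IS x} = {j \<in> {..<n}. x j \<le> TS x \<and> IS x \<noteq> j}" unfolding W_def by auto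
  also have "(\<Sum>j\<in>{j \<in> {..<n}. x j \<le> TS x \<and> IS x \<noteq> j}. c j) = (\<Sum>j<n. if x j \<le> TS x \<and> IS x \<noteq> j then c j else 0)"
    by (rule sum.inter_filter) simp
  finally have r: "(\<Sum>j\<in>W. c j) = c (IS x) + (\<Sum>j<n. if x j \<le> TS x \<and> IS x \<noteq> j then c j else 0)" .
  have nn: "0 \<le> (\<Sum>j<n. if x j \<le> TS x \<and> IS x \<noteq> j then c j else 0)"
    by (rule sum_nonneg) (use c_pos in \<open>auto simp: less_imp_le\<close>)
  have cI: "c (IS x) > 0" "v (IS x) \<ge> 0" using c_pos v_nonneg isp(1) by auto
  have "objective n c v proj x = ennreal (\<Sum>j\<in>W. c j) + ennreal (v (IS x))"
    unfolding objective_def W_def by simp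
  also have "\<dots> = ennreal (c (IS x) + v (IS x)) + ennreal (\<Sum>j<n. if x j \<le> TS x \<and> IS x \<noteq> j then c j else 0)"
  proof -
    have "0 \<le> c (IS x)" using cI by simp
    then show ?thesis unfolding r using nn cI(2) by (simp add: ennreal_plus add_ac)
  qed
  also have "ennreal (\<Sum>j<n. if x j \<le> TS x \<and> IS x \<noteq> j then c j else 0) =
      (\<Sum>j<n. ennreal (if x j \<le> TS x \<and> IS x \<noteq> j then c j else 0))"
    by (rule sum_ennreal[symmetric]) (use c_pos in \<open>auto simp: less_imp_le\<close>)
  also have "\<dots> = (\<Sum>j<n. ennreal (c j) * (if x j \<le> TS x \<and> IS x \<noteq> j then 1 else 0))"
    by (rule sum.cong) auto
  finally show ?thesis unfolding beta_def .
qed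

lemma sumF_le: "(\<Sum>j<n. ennreal (c j) * emeasure (D j) {..t}) \<le> t"
proof (cases "t = top")
  case True then show ?thesis by simp
next
  case False
  then obtain r where "t = ennreal r" "r \<ge> 0" by (cases t) auto
  then show ?thesis using sumb by simp
qed

lemma core:
  assumes S: "S \<in> sets (count_space UNIV \<Otimes>\<^sub>M borel)"
  shows "(\<integral>\<^sup>+x. indicator S (IS x, TS x) * objective n c v proj x \<partial>P)
     \<le> (\<integral>\<^sup>+x. indicator S (IS x, TS x) * (TS x + ennreal (beta c v (IS x))) \<partial>P)"
proof -
  define ind where "ind = (\<lambda>x. indicator S (IS x, TS x) :: ennreal)"
  have indm: "ind \<in> borel_measurable P" unfolding ind_def by (rule ind_meas[OF S])
  have bm: "(\<lambda>x. ennreal (beta c v (IS x))) \<in> borel_measurable P"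
    by (rule measurable_compose[OF IS_meas]) simp
  have ibm: "(\<lambda>x. ind x * ennreal (beta c v (IS x))) \<in> borel_measurable P"
    by (intro borel_measurable_times_ennreal indm bm)
  have pw: "ind x * objective n c v proj x = ind x * ennreal (beta c v (IS x)) + (\<Sum>j<n. Lf j S x)" for x
    unfolding obj_eq Lf_def ind_def by (simp add: distrib_left sum_distrib_left mult.assoc)
  have pw2: "ind x * ennreal (beta c v (IS x)) + (\<Sum>j<n. Rf j S x) \<le> ind x * (TS x + ennreal (beta c v (IS x)))" for x
  proof -
    have "(\<Sum>j<n. Rf j S x) = ind x * (\<Sum>j<n. ennreal (c j) * emeasure (D j) {..TS x})"
      unfolding Rf_def ind_def by (simp add: sum_distrib_left mult.assoc)
    also have "\<dots> \<le> ind x * TS x" by (rule mult_left_mono[OF sumF_le]) simp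
    finally have "(\<Sum>j<n. Rf j S x) \<le> ind x * TS x" .
    then have "ind x * ennreal (beta c v (IS x)) + (\<Sum>j<n. Rf j S x) \<le> ind x * ennreal (beta c v (IS x)) + ind x * TS x"
      by (rule add_left_mono)
    also have "\<dots> = ind x * (TS x + ennreal (beta c v (IS x)))" by (simp add: distrib_left)
    finally show ?thesis .
  qed
  have "(\<integral>\<^sup>+x. ind x * objective n c v proj x \<partial>P) = (\<integral>\<^sup>+x. ind x * ennreal (beta c v (IS x)) + (\<Sum>j<n. Lf j S x) \<partial>P)"
    unfolding pw ..
  also have "\<dots> = (\<integral>\<^sup>+x. ind x * ennreal (beta c v (IS x)) \<partial>P) + (\<integral>\<^sup>+x. (\<Sum>j<n. Lf j S x) \<partial>P)"
    by (rule nn_integral_add[OF ibm]) (use Lf_meas[OF _ S] in auto)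
  also have "(\<integral>\<^sup>+x. (\<Sum>j<n. Lf j S x) \<partial>P) = (\<Sum>j<n. integral\<^sup>N P (Lf j S))"
    by (rule nn_integral_sum) (use Lf_meas[OF _ S] in auto)
  also have "\<dots> \<le> (\<Sum>j<n. integral\<^sup>N P (Rf j S))"
    by (rule sum_mono) (use per_j[OF _ S] in auto)
  also have "\<dots> = (\<integral>\<^sup>+x. (\<Sum>j<n. Rf j S x) \<partial>P)"
    by (rule nn_integral_sum[symmetric]) (use Rf_meas[OF _ S] in auto)
  also have "(\<integral>\<^sup>+x. ind x * ennreal (beta c v (IS x)) \<partial>P) + (\<integral>\<^sup>+x. (\<Sum>j<n. Rf j S x) \<partial>P)
      = (\<integral>\<^sup>+x. ind x * ennreal (beta c v (IS x)) + (\<Sum>j<n. Rf j S x) \<partial>P)"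
    by (rule nn_integral_add[OF ibm, symmetric]) (use Rf_meas[OF _ S] in auto)
  also have "\<dots> \<le> (\<integral>\<^sup>+x. ind x * (TS x + ennreal (beta c v (IS x))) \<partial>P)"
    by (rule nn_integral_mono) (rule pw2)
  finally show ?thesis unfolding ind_def by simp
qed


lemma ifj_meas: "j < n \<Longrightarrow> (\<lambda>x. if x j \<le> TS x \<and> IS x \<noteq> j then 1 else 0 :: ennreal) \<in> borel_measurable P"
proof -
  assume j: "j < n"
  have "{x \<in> space P. x j \<le> TS x} \<in> sets P" by (rule borel_measurable_le[OF comp_meas[OF j] TS_meas])
  moreover have "IS -` (UNIV - {j}) \<inter> space P \<in> sets P" by (rule measurable_sets[OF IS_meas]) auto
  ultimately have "{x \<in> space P. x j \<le> TS x} \<inter> (IS -` (UNIV - {j}) \<inter> space P) \<in> sets P" by auto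
  moreover have "{x \<in> space P. x j \<le> TS x} \<inter> (IS -` (UNIV - {j}) \<inter> space P) = {x \<in> space P. x j \<le> TS x \<and> IS x \<noteq> j}" by auto
  ultimately have pr: "{x \<in> space P. x j \<le> TS x \<and> IS x \<noteq> j} \<in> sets P" by simp
  show ?thesis by (rule measurable_If[OF measurable_const measurable_const pr]) auto
qed

lemma obj_meas: "objective n c v proj \<in> borel_measurable P"
proof -
  have bm: "(\<lambda>x. ennreal (beta c v (IS x))) \<in> borel_measurable P"
    by (rule measurable_compose[OF IS_meas]) simp
  have sm: "(\<lambda>x. \<Sum>j<n. ennreal (c j) * (if x j \<le> TS x \<and> IS x \<noteq> j then 1 else 0)) \<in> borel_measurable P"
    by (rule borel_measurable_sum) (auto intro!: borel_measurable_times_ennreal ifj_meas)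
  have "objective n c v proj = (\<lambda>x. ennreal (beta c v (IS x)) +
     (\<Sum>j<n. ennreal (c j) * (if x j \<le> TS x \<and> IS x \<noteq> j then 1 else 0)))"
    by (rule ext) (rule obj_eq)
  then show ?thesis using borel_measurable_add[OF bm sm] by simp
qed

end

lemma objective_cong:
  assumes "\<And>k. k < n \<Longrightarrow> \<alpha> k \<omega> = \<alpha>2 k \<omega>2"
  shows "objective n c v \<alpha> \<omega> = objective n c v \<alpha>2 \<omega>2"
proof -
  have tb: "\<And>k. k < n \<Longrightarrow> tau_box c v \<alpha> k \<omega> = tau_box c v \<alpha>2 k \<omega>2"
    using assms by (simp add: tau_box_def)
  have T: "tau_star n c v \<alpha> \<omega> = tau_star n c v \<alpha>2 \<omega>2" by (rule tau_star_cong[OF tb])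
  have I: "i_star n c v \<alpha> \<omega> = i_star n c v \<alpha>2 \<omega>2" by (rule i_star_cong[OF tb])
  have W: "{j. j < n \<and> \<alpha> j \<omega> \<le> tau_star n c v \<alpha> \<omega>} = {j. j < n \<and> \<alpha>2 j \<omega>2 \<le> tau_star n c v \<alpha>2 \<omega>2}"
    using assms T by auto
  show ?thesis unfolding objective_def W I ..
qed

theorem lemma4p6:
  fixes n :: nat and c v :: "nat \<Rightarrow> real" and X :: "nat \<Rightarrow> real \<Rightarrow> real"
    and M :: "'a measure" and \<alpha> :: "nat \<Rightarrow> 'a \<Rightarrow> ennreal"
  assumes "n > 0"
    and "\<And>i. i < n \<Longrightarrow> c i > 0"
    and "\<And>i. i < n \<Longrightarrow> v i \<ge> 0"
    and "gccp_feasible n c X"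
    and "prob_space M"
    and "\<And>i. i < n \<Longrightarrow> \<alpha> i \<in> borel_measurable M"
    and "prob_space.indep_vars M (\<lambda>_. borel) \<alpha> {..<n}"
    and "\<And>i \<tau>. i < n \<Longrightarrow> \<tau> \<ge> 0 \<Longrightarrow>
           measure M {\<omega> \<in> space M. \<alpha> i \<omega> > ennreal \<tau>} = exp (- cum_rate c X i \<tau>)"
  shows "AE \<omega> in M.
           nn_cond_exp M
             (vimage_algebra (space M) (\<lambda>\<omega>. (i_star n c v \<alpha> \<omega>, tau_star n c v \<alpha> \<omega>))
                (count_space UNIV \<Otimes>\<^sub>M borel))
             (objective n c v \<alpha>) \<omega>
           \<le> tau_star n c v \<alpha> \<omega> + ennreal (beta c v (i_star n c v \<alpha> \<omega>))"
proof -
  interpret Mp: prob_space M by (rule assms(5))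
  define D where "D = (\<lambda>i. if i < n then distr M borel (\<alpha> i) else return borel (0::ennreal))"
  have sD: "\<And>i. sets (D i) = sets borel" unfolding D_def by simp
  have pD: "prob_space (D i)" for i
  proof (cases "i < n")
    case True then show ?thesis unfolding D_def using Mp.prob_space_distr[OF assms(6)[OF True]] by simp
  next
    case False then show ?thesis unfolding D_def using prob_space_return[of "0::ennreal" borel] by simp
  qed
  have atomD: "emeasure (D j) {ennreal t} = 0" if j: "j < n" and t: "t \<ge> 0" for j t
  proof -
    have "emeasure (distr M borel (\<alpha> j)) {ennreal t} = 0"
      by (rule Mp.distr_atom[OF assms(6)[OF j] t assms(8)[OF j] cum_rate_0
            cum_rate_isCont[OF assms(4) j assms(2)[OF j]]])
    then show ?thesis using j unfolding D_def by simp
  qed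
  have sumbD: "(\<Sum>j<n. ennreal (c j) * emeasure (D j) {..ennreal t}) \<le> ennreal t" if t: "t \<ge> 0" for t
  proof -
    have Cnn: "\<And>j. j < n \<Longrightarrow> 0 \<le> cum_rate c X j t"
      using cum_rate_nonneg[OF assms(4) _ assms(2)] by blast
    have e1: "\<And>j. j < n \<Longrightarrow> 0 \<le> 1 - exp (- cum_rate c X j t)"
      using Cnn by simp
    have "(\<Sum>j<n. ennreal (c j) * emeasure (D j) {..ennreal t}) = (\<Sum>j<n. ennreal (c j * (1 - exp (- cum_rate c X j t))))"
    proof (rule sum.cong[OF refl])
      fix j assume "j \<in> {..<n}"
      then have j: "j < n" by simp
      have "emeasure (D j) {..ennreal t} = ennreal (1 - exp (- cum_rate c X j t))"
        using Mp.distr_atMost[where C="cum_rate c X j", OF assms(6)[OF j] t assms(8)[OF j t]] j unfolding D_def by simp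
      then show "ennreal (c j) * emeasure (D j) {..ennreal t} = ennreal (c j * (1 - exp (- cum_rate c X j t)))"
        using e1[OF j] assms(2)[OF j] by (simp add: ennreal_mult)
    qed
    also have "\<dots> = ennreal (\<Sum>j<n. c j * (1 - exp (- cum_rate c X j t)))"
      by (rule sum_ennreal) (use e1 assms(2) in \<open>auto intro!: mult_nonneg_nonneg simp: less_imp_le\<close>)
    also have "\<dots> \<le> ennreal (\<Sum>j<n. c j * cum_rate c X j t)"
    proof (rule ennreal_leI, rule sum_mono)
      fix j assume "j \<in> {..<n}"
      then have j: "j < n" by simp
      have "1 - exp (- cum_rate c X j t) \<le> cum_rate c X j t"
        using exp_ge_add_one_self[of "- cum_rate c X j t"] by simp
      then show "c j * (1 - exp (- cum_rate c X j t)) \<le> c j * cum_rate c X j t"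
        using assms(2)[OF j] by (intro mult_left_mono) auto
    qed
    also have "\<dots> \<le> ennreal t"
      by (rule ennreal_leI, rule cum_rate_sum[OF assms(4) assms(2) t])
    finally show ?thesis .
  qed
  interpret core_setup n c v D
    by (rule core_setup.intro[OF assms(1) assms(2) assms(3) sD pD atomD sumbD])
  define A where "A = (\<lambda>\<omega>. \<lambda>i\<in>{..<n}. \<alpha> i \<omega>)"
  have Am: "A \<in> measurable M P"
    unfolding A_def
  proof (rule measurable_restrict)
    fix i assume "i \<in> {..<n}"
    then show "\<alpha> i \<in> measurable M (D i)"
      using assms(6)[of i] by (simp add: measurable_cong_sets[OF refl sD])
  qed
  have distrA: "distr M P A = P"
  proof -
    have rv: "\<And>i. i \<in> {..<n} \<Longrightarrow> \<alpha> i \<in> measurable M borel" using assms(6) by auto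
    have ne: "{..<n} \<noteq> {}" using assms(1) by auto
    have "distr M (PiM {..<n} (\<lambda>_. borel)) A = PiM {..<n} (\<lambda>i. distr M borel (\<alpha> i))"
      using Mp.indep_vars_iff_distr_eq_PiM'[where I="{..<n}" and M'="\<lambda>_. borel" and X=\<alpha>, OF ne rv] assms(7) unfolding A_def by blast
    also have "\<dots> = P" by (rule PiM_cong) (auto simp: D_def)
    also have "distr M (PiM {..<n} (\<lambda>_. borel)) A = distr M P A"
      by (rule distr_cong[OF refl _ refl]) (rule sets_PiM_cong[OF refl], simp add: sD)
    finally show ?thesis .
  qed
  have Ak: "\<And>k \<omega>. k < n \<Longrightarrow> \<alpha> k \<omega> = A \<omega> k" unfolding A_def by simp
  have tbe: "\<And>k \<omega>. k < n \<Longrightarrow> tau_box c v \<alpha> k \<omega> = tau_box c v proj k (A \<omega>)"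
    using Ak by (simp add: tau_box_def)
  have TSe: "\<And>\<omega>. tau_star n c v \<alpha> \<omega> = TS (A \<omega>)" by (rule tau_star_cong[OF tbe])
  have ISe: "\<And>\<omega>. i_star n c v \<alpha> \<omega> = IS (A \<omega>)" by (rule i_star_cong[OF tbe])
  have OBe: "\<And>\<omega>. objective n c v \<alpha> \<omega> = objective n c v proj (A \<omega>)" by (rule objective_cong) (simp add: A_def)
  define N where "N = (count_space (UNIV :: nat set) \<Otimes>\<^sub>M (borel :: ennreal measure))"
  define Pm where "Pm = (\<lambda>\<omega>. (i_star n c v \<alpha> \<omega>, tau_star n c v \<alpha> \<omega>))"
  define F where "F = vimage_algebra (space M) Pm N"
  have Pm_eq: "Pm = (\<lambda>\<omega>. (IS (A \<omega>), TS (A \<omega>)))" unfolding Pm_def TSe ISe ..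
  have Pmm: "Pm \<in> measurable M N"
    unfolding Pm_eq N_def using measurable_compose[OF Am pair_meas] by simp
  have Pms: "Pm \<in> space M \<rightarrow> space N" using measurable_space[OF Pmm] by auto
  have setsF: "sets F = {Pm -` B \<inter> space M | B. B \<in> sets N}"
    unfolding F_def by (rule sets_vimage_algebra2[OF Pms])
  have subalg: "subalgebra M F"
  proof -
    have "space F = space M" unfolding F_def by simp
    moreover have "sets F \<subseteq> sets M"
    proof
      fix X assume "X \<in> sets F"
      then obtain B where "B \<in> sets N" "X = Pm -` B \<inter> space M" using setsF by blast
      then show "X \<in> sets M" using measurable_sets[OF Pmm] by blast
    qed
    ultimately show ?thesis unfolding subalgebra_def by blast
  qed
  have sf: "sigma_finite_subalgebra M F"
    by (rule finite_measure_subalgebra_is_sigma_finite)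
       (simp add: finite_measure_subalgebra_def finite_measure_subalgebra_axioms_def subalg Mp.finite_measure_axioms)
  have fm: "objective n c v \<alpha> \<in> borel_measurable M"
    unfolding OBe using measurable_compose[OF Am obj_meas] by simp
  define h where "h = (\<lambda>p::nat \<times> ennreal. snd p + ennreal (beta c v (fst p)))"
  have hm: "h \<in> borel_measurable N"
  proof -
    have "(\<lambda>p::nat \<times> ennreal. ennreal (beta c v (fst p))) \<in> borel_measurable N"
      unfolding N_def by (rule measurable_compose[OF measurable_fst]) simp
    then show ?thesis unfolding h_def N_def by (intro borel_measurable_add measurable_snd) (simp_all add: N_def)
  qed
  have gm: "(\<lambda>\<omega>. tau_star n c v \<alpha> \<omega> + ennreal (beta c v (i_star n c v \<alpha> \<omega>))) \<in> borel_measurable F"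
  proof -
    have "(\<lambda>\<omega>. h (Pm \<omega>)) \<in> borel_measurable F"
      unfolding F_def by (rule measurable_compose[OF measurable_vimage_algebra1[OF Pms] hm])
    then show ?thesis by (simp add: h_def Pm_def)
  qed
  have bm: "(\<lambda>x. ennreal (beta c v (IS x))) \<in> borel_measurable P"
    by (rule measurable_compose[OF IS_meas]) simp
  have le: "(\<integral>\<^sup>+\<omega>. indicator A' \<omega> * objective n c v \<alpha> \<omega> \<partial>M)
      \<le> (\<integral>\<^sup>+\<omega>. indicator A' \<omega> * (tau_star n c v \<alpha> \<omega> + ennreal (beta c v (i_star n c v \<alpha> \<omega>))) \<partial>M)"
    if A': "A' \<in> sets F" for A'
  proof -
    obtain B where B: "B \<in> sets N" "A' = Pm -` B \<inter> space M" using A' setsF by blast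
    have BS: "B \<in> sets (count_space UNIV \<Otimes>\<^sub>M borel)" using B(1) unfolding N_def .
    have indA: "\<And>\<omega>. \<omega> \<in> space M \<Longrightarrow> indicator A' \<omega> = (indicator B (IS (A \<omega>), TS (A \<omega>)) :: ennreal)"
      using B(2) unfolding Pm_eq by (simp add: indicator_def)
    have m1: "(\<lambda>x. indicator B (IS x, TS x) * objective n c v proj x) \<in> borel_measurable P"
      by (intro borel_measurable_times_ennreal ind_meas[OF BS] obj_meas)
    have m2: "(\<lambda>x. indicator B (IS x, TS x) * (TS x + ennreal (beta c v (IS x)))) \<in> borel_measurable P"
      by (intro borel_measurable_times_ennreal ind_meas[OF BS] borel_measurable_add TS_meas bm)
    have m1': "(\<lambda>x. indicator B (IS x, TS x) * objective n c v proj x) \<in> borel_measurable (distr M P A)"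
      unfolding distrA by (rule m1)
    have m2': "(\<lambda>x. indicator B (IS x, TS x) * (TS x + ennreal (beta c v (IS x)))) \<in> borel_measurable (distr M P A)"
      unfolding distrA by (rule m2)
    have "(\<integral>\<^sup>+\<omega>. indicator A' \<omega> * objective n c v \<alpha> \<omega> \<partial>M)
        = (\<integral>\<^sup>+\<omega>. (\<lambda>x. indicator B (IS x, TS x) * objective n c v proj x) (A \<omega>) \<partial>M)"
      by (rule nn_integral_cong) (simp add: indA OBe)
    also have "\<dots> = (\<integral>\<^sup>+x. indicator B (IS x, TS x) * objective n c v proj x \<partial>distr M P A)"
      using nn_integral_distr[OF Am m1'] by simp
    also have "\<dots> = (\<integral>\<^sup>+x. indicator B (IS x, TS x) * objective n c v proj x \<partial>P)" unfolding distrA ..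
    also have "\<dots> \<le> (\<integral>\<^sup>+x. indicator B (IS x, TS x) * (TS x + ennreal (beta c v (IS x))) \<partial>P)"
      by (rule core[OF BS])
    also have "\<dots> = (\<integral>\<^sup>+x. indicator B (IS x, TS x) * (TS x + ennreal (beta c v (IS x))) \<partial>distr M P A)"
      unfolding distrA ..
    also have "\<dots> = (\<integral>\<^sup>+\<omega>. (\<lambda>x. indicator B (IS x, TS x) * (TS x + ennreal (beta c v (IS x)))) (A \<omega>) \<partial>M)"
      using nn_integral_distr[OF Am m2'] by simp
    also have "\<dots> = (\<integral>\<^sup>+\<omega>. indicator A' \<omega> * (tau_star n c v \<alpha> \<omega> + ennreal (beta c v (i_star n c v \<alpha> \<omega>))) \<partial>M)"
      by (rule nn_integral_cong) (simp add: indA TSe ISe)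
    finally show ?thesis .
  qed
  have "AE \<omega> in M. nn_cond_exp M F (objective n c v \<alpha>) \<omega> \<le> tau_star n c v \<alpha> \<omega> + ennreal (beta c v (i_star n c v \<alpha> \<omega>))"
    by (rule cond_le[OF sf Mp.finite_measure_axioms fm gm le])
  then show ?thesis unfolding F_def Pm_def N_def .
qed

end
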